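(* Let $r\ge 1$ and let $f:\{0,1\}^r\to\{0,1\}$ be any Boolean function. Then $f$ can be performed deterministically in non-adaptive measurement-based quantum computing (nMBQC) using at most $n=2^r-1$ parties; that is, for some $n\le 2^r-1$ there exist an $n\times r$ binary matrix $P$ with no all-zero row, an $n$-partite quantum state and, for each party, a pair of two-outcome measurements, such that for every $\mathbf{x}\in\{0,1\}^r$ the outcomes satisfy $\bigoplus_{j=1}^n m_j=f(\mathbf{x})$ with probability $1$.
   Context: nMBQC: $n$ non-communicating parties share a quantum state $\rho$ on $\mathcal{H}_1\otimes\cdots\otimes\mathcal{H}_n$. A classical control computer receives $\mathbf{x}\in\{0,1\}^r$ and, using only XOR (mod-2 addition) operations, computes $\mathbf{s}=(P\mathbf{x})\bmod 2$ for a fixed $n\times r$ binary matrix $P$ with no all-zero row, sending $s_j\in\{0,1\}$ to party $j$. Party $j$ performs one of two two-outcome measurements (POVMs $\{E^{(j)}_{0|s_j},E^{(j)}_{1|s_j}\}$) chosen by $s_j$, in a single round, obtaining $m_j\in\{0,1\}$ with joint probability $\mathrm{Tr}[\rho\bigotimes_j E^{(j)}_{m_j|s_j}]$. The control computer outputs $\bigoplus_j m_j$ (sum mod 2). A Boolean function $f$ is performed deterministically if for every $\mathbf{x}$ the output equals $f(\mathbf{x})$ with probability $1$. *)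

theory Defs
  imports Complex_Main "HOL-Library.FuncSet"
begin

text \<open>Party j has Hilbert space C^(d j);
  basis indices of the joint space H_1 (x) ... (x) H_n are tuples
  i \<in> PiE {..<n} (\<lambda>j. {..<d j}). Operators are given by their matrix entries.\<close>

definition idx_set :: "nat \<Rightarrow> (nat \<Rightarrow> nat) \<Rightarrow> (nat \<Rightarrow> nat) set" where
  "idx_set n d = PiE {..<n} (\<lambda>j. {..<d j})"

definition psd_on :: "'i set \<Rightarrow> ('i \<Rightarrow> 'i \<Rightarrow> complex) \<Rightarrow> bool" where
  "psd_on S A \<longleftrightarrow> (\<forall>v :: 'i \<Rightarrow> complex.
     (\<Sum>i\<in>S. \<Sum>k\<in>S. cnj (v i) * A i k * v k) \<in> \<real> \<and>
     0 \<le> Re (\<Sum>i\<in>S. \<Sum>k\<in>S. cnj (v i) * A i k * v k))"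

definition density_on :: "'i set \<Rightarrow> ('i \<Rightarrow> 'i \<Rightarrow> complex) \<Rightarrow> bool" where
  "density_on S \<rho> \<longleftrightarrow> psd_on S \<rho> \<and> (\<Sum>i\<in>S. \<rho> i i) = 1"

definition povm2 :: "nat \<Rightarrow> (bool \<Rightarrow> nat \<Rightarrow> nat \<Rightarrow> complex) \<Rightarrow> bool" where
  "povm2 d E \<longleftrightarrow> psd_on {..<d} (E False) \<and> psd_on {..<d} (E True) \<and>
     (\<forall>a<d. \<forall>b<d. E False a b + E True a b = (if a = b then 1 else 0))"

text \<open>Joint outcome probability Tr[rho (E^(1)_{m_1|s_1} (x) ... (x) E^(n)_{m_n|s_n})].
  E j s m is the effect of party j for setting s and outcome m.\<close>
definition joint_prob ::
  "nat \<Rightarrow> (nat \<Rightarrow> nat) \<Rightarrow> ((nat \<Rightarrow> nat) \<Rightarrow> (nat \<Rightarrow> nat) \<Rightarrow> complex)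
   \<Rightarrow> (nat \<Rightarrow> bool \<Rightarrow> bool \<Rightarrow> nat \<Rightarrow> nat \<Rightarrow> complex)
   \<Rightarrow> (nat \<Rightarrow> bool) \<Rightarrow> (nat \<Rightarrow> bool) \<Rightarrow> complex" where
  "joint_prob n d \<rho> E s m =
     (\<Sum>i\<in>idx_set n d. \<Sum>k\<in>idx_set n d. \<rho> i k * (\<Prod>j<n. E j (s j) (m j) (k j) (i j)))"

definition ctrl_input :: "nat \<Rightarrow> (nat \<Rightarrow> nat \<Rightarrow> bool) \<Rightarrow> bool list \<Rightarrow> nat \<Rightarrow> bool" where
  "ctrl_input r P x j = odd (card {k. k < r \<and> P j k \<and> x ! k})"

definition parity :: "nat \<Rightarrow> (nat \<Rightarrow> bool) \<Rightarrow> bool" where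
  "parity n m = odd (card {j. j < n \<and> m j})"

definition performs_det ::
  "nat \<Rightarrow> nat \<Rightarrow> (nat \<Rightarrow> nat) \<Rightarrow> (nat \<Rightarrow> nat \<Rightarrow> bool)
   \<Rightarrow> ((nat \<Rightarrow> nat) \<Rightarrow> (nat \<Rightarrow> nat) \<Rightarrow> complex)
   \<Rightarrow> (nat \<Rightarrow> bool \<Rightarrow> bool \<Rightarrow> nat \<Rightarrow> nat \<Rightarrow> complex)
   \<Rightarrow> (bool list \<Rightarrow> bool) \<Rightarrow> bool" where
  "performs_det r n d P \<rho> E f \<longleftrightarrow>
     (\<forall>x. length x = r \<longrightarrow>
        (\<Sum>m\<in>{m \<in> PiE {..<n} (\<lambda>_. UNIV). parity n m = f x}.
            joint_prob n d \<rho> E (ctrl_input r P x) m) = 1)"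

end

theory Submission
  imports Defs
begin


definition par :: "nat \<Rightarrow> nat \<Rightarrow> bool list \<Rightarrow> real" where
  "par r a x = of_bool (odd (card {k. k < r \<and> bit a k \<and> x ! k}))"

definition rep :: "nat \<Rightarrow> (bool list \<Rightarrow> real) \<Rightarrow> bool" where
  "rep r g \<longleftrightarrow> (\<exists>c0 c. \<forall>x. length x = r \<longrightarrow> g x = c0 + (\<Sum>a<2^r. c a * par r a x))"

lemma rep_cong: "rep r g \<Longrightarrow> (\<And>x. length x = r \<Longrightarrow> g x = h x) \<Longrightarrow> rep r h"
  unfolding rep_def by metis

lemma rep_const: "rep r (\<lambda>_. c)"
  unfolding rep_def by (rule exI[of _ c], rule exI[of _ "\<lambda>_. 0"]) simp

lemma par_take: "par r (take_bit r a) = par r a"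
  unfolding par_def by (auto simp: bit_take_bit_iff intro!: arg_cong[where f=card])

lemma rep_par: "rep r (par r a)"
proof -
  have lt: "take_bit r a < 2^r" by (simp add: take_bit_eq_mod)
  have "rep r (par r (take_bit r a))"
    unfolding rep_def
    by (rule exI[of _ 0], rule exI[of _ "\<lambda>b. if b = take_bit r a then 1 else 0"])
       (simp add: lt if_distrib[where f="\<lambda>c. c * _"] sum.delta cong: if_cong)
  thus ?thesis by (simp add: par_take)
qed

lemma rep_add: "rep r g \<Longrightarrow> rep r h \<Longrightarrow> rep r (\<lambda>x. g x + h x)"
  unfolding rep_def
proof (elim exE)
  fix c0 c d0 d
  assume g: "\<forall>x. length x = r \<longrightarrow> g x = c0 + (\<Sum>a<2 ^ r. c a * par r a x)"
    and h: "\<forall>x. length x = r \<longrightarrow> h x = d0 + (\<Sum>a<2 ^ r. d a * par r a x)"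
  show "\<exists>c0 c. \<forall>x. length x = r \<longrightarrow> g x + h x = c0 + (\<Sum>a<2 ^ r. c a * par r a x)"
    by (rule exI[of _ "c0+d0"], rule exI[of _ "\<lambda>a. c a + d a"])
       (simp add: g h sum.distrib distrib_right)
qed

lemma rep_scale: "rep r g \<Longrightarrow> rep r (\<lambda>x. k * g x)"
  unfolding rep_def
proof (elim exE)
  fix c0 c
  assume g: "\<forall>x. length x = r \<longrightarrow> g x = c0 + (\<Sum>a<2 ^ r. c a * par r a x)"
  show "\<exists>c0 c. \<forall>x. length x = r \<longrightarrow> k * g x = c0 + (\<Sum>a<2 ^ r. c a * par r a x)"
    by (rule exI[of _ "k*c0"], rule exI[of _ "\<lambda>a. k * c a"])
       (simp add: g sum_distrib_left distrib_left mult.assoc)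
qed

lemma rep_sum: "finite A \<Longrightarrow> (\<And>i. i \<in> A \<Longrightarrow> rep r (F i)) \<Longrightarrow> rep r (\<lambda>x. \<Sum>i\<in>A. F i x)"
proof (induction A rule: finite_induct)
  case empty then show ?case using rep_const[of r 0] by simp
next
  case (insert a A) then show ?case by (simp add: rep_add)
qed

lemma odd_card_symdiff:
  assumes "finite A" "finite B"
  shows "odd (card ((A - B) \<union> (B - A))) \<longleftrightarrow> (odd (card A) \<noteq> odd (card B))"
proof -
  have 1: "card A = card (A - B) + card (A \<inter> B)"
    using assms by (metis Int_Diff_disjoint Int_commute Un_Diff_Int card_Un_disjoint finite_Diff finite_Int)
  have 2: "card B = card (B - A) + card (A \<inter> B)"
    using assms by (metis Int_Diff_disjoint Int_commute Un_Diff_Int card_Un_disjoint finite_Diff finite_Int)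
  have 3: "card ((A - B) \<union> (B - A)) = card (A - B) + card (B - A)"
    using assms by (intro card_Un_disjoint) auto
  show ?thesis using 1 2 3 by presburger
qed

lemma par_xor: "par r (xor a b) x = of_bool ((par r a x = 1) \<noteq> (par r b x = 1))"
proof -
  let ?A = "{k. k < r \<and> bit a k \<and> x ! k}" and ?B = "{k. k < r \<and> bit b k \<and> x ! k}"
  have "{k. k < r \<and> bit (xor a b) k \<and> x ! k} = (?A - ?B) \<union> (?B - ?A)"
    by (auto simp: bit_xor_iff)
  moreover have "finite ?A" "finite ?B" by auto
  ultimately show ?thesis unfolding par_def using odd_card_symdiff[of ?A ?B] by simp
qed

lemma par_mult: "par r a x * par r b x = (par r a x + par r b x - par r (xor a b) x) / 2"
  unfolding par_xor by (simp add: par_def)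

lemma rep_par_mult: "rep r h \<Longrightarrow> rep r (\<lambda>x. par r a x * h x)"
proof -
  assume "rep r h"
  then obtain d0 d where h: "\<And>x. length x = r \<Longrightarrow> h x = d0 + (\<Sum>b<2^r. d b * par r b x)"
    unfolding rep_def by blast
  have "rep r (\<lambda>x. d0 * par r a x + (\<Sum>b<2^r. d b * ((1/2) * par r a x + (1/2) * par r b x + (-1/2) * par r (xor a b) x)))"
    by (intro rep_add rep_scale rep_sum rep_par finite_lessThan)
  then show ?thesis
    by (rule rep_cong) (simp add: h distrib_left sum_distrib_left par_mult algebra_simps
        add_divide_distrib diff_divide_distrib sum.distrib sum_subtractf xor.commute)
qed

lemma rep_mult: "rep r g \<Longrightarrow> rep r h \<Longrightarrow> rep r (\<lambda>x. g x * h x)"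
proof -
  assume "rep r g" "rep r h"
  then obtain c0 c where g: "\<And>x. length x = r \<Longrightarrow> g x = c0 + (\<Sum>a<2^r. c a * par r a x)"
    unfolding rep_def by blast
  have "rep r (\<lambda>x. c0 * h x + (\<Sum>a<2^r. c a * (par r a x * h x)))"
    using \<open>rep r h\<close> by (intro rep_add rep_scale rep_sum rep_par_mult finite_lessThan)
  then show ?thesis
    by (rule rep_cong) (simp add: g distrib_right sum_distrib_right mult.assoc)
qed

lemma rep_prod: "finite A \<Longrightarrow> (\<And>i. i \<in> A \<Longrightarrow> rep r (F i)) \<Longrightarrow> rep r (\<lambda>x. \<Prod>i\<in>A. F i x)"
proof (induction A rule: finite_induct)
  case empty then show ?case using rep_const[of r 1] by simp
next
  case (insert a A) then show ?case by (simp add: rep_mult)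
qed

lemma par_pow2: "k < r \<Longrightarrow> par r (2^k) x = of_bool (x ! k)"
proof -
  assume k: "k < r"
  have "{k'. k' < r \<and> bit ((2::nat)^k) k' \<and> x ! k'} = (if x ! k then {k} else {})"
    using k by (auto simp: bit_exp_iff)
  thus ?thesis unfolding par_def by simp
qed

lemma rep_all: "rep r g"
proof -
  let ?Y = "{y::bool list. length y = r}"
  have fin: "finite ?Y" using finite_lists_length_eq[of "UNIV::bool set" r] by simp
  have fac: "rep r (\<lambda>x. if x ! k = y ! k then 1 else 0)" if "k < r" for y k
  proof -
    have "rep r (\<lambda>x. (if y ! k then 1 else -1) * par r (2^k) x + (if y ! k then 0 else 1))"
      by (intro rep_add rep_scale rep_par rep_const)
    then show ?thesis by (rule rep_cong) (use that in \<open>auto simp: par_pow2\<close>)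
  qed
  have "rep r (\<lambda>x. \<Sum>y\<in>?Y. g y * (\<Prod>k<r. if x ! k = y ! k then 1 else 0))"
    by (intro rep_sum rep_scale rep_prod fac) (use fin in auto)
  moreover have "(\<Sum>y\<in>?Y. g y * (\<Prod>k<r. if x ! k = y ! k then 1 else 0)) = g x"
    if "length x = r" for x
  proof -
    have "(\<Prod>k<r. if x ! k = y ! k then 1 else (0::real)) = (if y = x then 1 else 0)"
      if "y \<in> ?Y" for y
      using that \<open>length x = r\<close> by (auto intro: nth_equalityI)
    then have "(\<Sum>y\<in>?Y. g y * (\<Prod>k<r. if x ! k = y ! k then 1 else 0))
       = (\<Sum>y\<in>?Y. if y = x then g y else 0)" by (intro sum.cong) auto
    also have "\<dots> = g x" using fin that by (simp add: sum.delta)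
    finally show ?thesis .
  qed
  ultimately show ?thesis by (rule rep_cong)
qed



lemma psd_rank1:
  assumes "c \<ge> 0"
  shows "psd_on S (\<lambda>i k. complex_of_real c * (w i * cnj (w k)))"
  unfolding psd_on_def
proof
  fix v :: "'a \<Rightarrow> complex"
  define W where "W = (\<Sum>k\<in>S. cnj (w k) * v k)"
  have "(\<Sum>i\<in>S. \<Sum>k\<in>S. cnj (v i) * (complex_of_real c * (w i * cnj (w k))) * v k)
      = (\<Sum>i\<in>S. \<Sum>k\<in>S. (complex_of_real c * (cnj (v i) * w i)) * (cnj (w k) * v k))"
    by (intro sum.cong refl) (simp add: algebra_simps)
  also have "\<dots> = (\<Sum>i\<in>S. (complex_of_real c * (cnj (v i) * w i)) * W)"
    unfolding W_def sum_distrib_left ..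

  also have "\<dots> = complex_of_real c * (cnj W * W)"
  proof -
    have cW: "cnj W = (\<Sum>i\<in>S. cnj (v i) * w i)" unfolding W_def cnj_sum by (simp add: mult.commute)
    show ?thesis unfolding cW sum_distrib_right sum_distrib_left by (simp add: mult.assoc)
  qed
  also have "cnj W * W = complex_of_real ((norm W)^2)"
    by (metis complex_norm_square mult.commute of_real_power)
  finally have eq: "(\<Sum>i\<in>S. \<Sum>k\<in>S. cnj (v i) * (complex_of_real c * (w i * cnj (w k))) * v k)
      = complex_of_real (c * (norm W)^2)" by simp
  show "(\<Sum>i\<in>S. \<Sum>k\<in>S. cnj (v i) * (complex_of_real c * (w i * cnj (w k))) * v k) \<in> \<real> \<and>
        0 \<le> Re (\<Sum>i\<in>S. \<Sum>k\<in>S. cnj (v i) * (complex_of_real c * (w i * cnj (w k))) * v k)"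
    unfolding eq using assms by simp
qed

definition Zv :: "nat \<Rightarrow> nat \<Rightarrow> nat" where "Zv n = restrict (\<lambda>_. 0) {..<n}"
definition Ov :: "nat \<Rightarrow> nat \<Rightarrow> nat" where "Ov n = restrict (\<lambda>_. 1) {..<n}"

definition psi :: "nat \<Rightarrow> (nat \<Rightarrow> nat) \<Rightarrow> complex" where
  "psi n i = (if i = Zv n \<or> i = Ov n then complex_of_real (1 / sqrt 2) else 0)"

definition rho :: "nat \<Rightarrow> (nat \<Rightarrow> nat) \<Rightarrow> (nat \<Rightarrow> nat) \<Rightarrow> complex" where
  "rho n i k = complex_of_real 1 * (psi n i * cnj (psi n k))"

definition sg :: "bool \<Rightarrow> complex" where "sg m = (if m then -1 else 1)"

definition uu :: "real \<Rightarrow> bool \<Rightarrow> nat \<Rightarrow> complex" where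
  "uu t m a = (if a = 0 then 1 else sg m * cis t)"

definition Eff :: "(nat \<Rightarrow> bool \<Rightarrow> real) \<Rightarrow> nat \<Rightarrow> bool \<Rightarrow> bool \<Rightarrow> nat \<Rightarrow> nat \<Rightarrow> complex" where
  "Eff \<theta> j s m a b = complex_of_real (1/2) * (uu (\<theta> j s) m a * cnj (uu (\<theta> j s) m b))"

lemma cnj_psi[simp]: "cnj (psi n i) = psi n i"
  unfolding psi_def by simp

lemma ZO_in: "Zv n \<in> idx_set n (\<lambda>_. 2)" "Ov n \<in> idx_set n (\<lambda>_. 2)"
  unfolding idx_set_def Zv_def Ov_def by auto

lemma ZO_ne: "n \<ge> 1 \<Longrightarrow> Zv n \<noteq> Ov n"
  unfolding Zv_def Ov_def by (metis One_nat_def lessThan_iff less_le_trans restrict_apply' zero_less_one zero_neq_one)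

lemma fin_idx: "finite (idx_set n (\<lambda>_. 2))"
  unfolding idx_set_def by (intro finite_PiE) auto

lemma sum_psi:
  assumes "n \<ge> 1"
  shows "(\<Sum>i\<in>idx_set n (\<lambda>_. 2). psi n i * F i) = complex_of_real (1 / sqrt 2) * (F (Zv n) + F (Ov n))"
proof -
  have "(\<Sum>i\<in>idx_set n (\<lambda>_. 2). psi n i * F i) = (\<Sum>i\<in>{Zv n, Ov n}. psi n i * F i)"
    by (rule sum.mono_neutral_right) (auto simp: fin_idx ZO_in psi_def)
  also have "\<dots> = complex_of_real (1 / sqrt 2) * (F (Zv n) + F (Ov n))"
    using ZO_ne[OF assms] by (simp add: psi_def distrib_left)
  finally show ?thesis .
qed

lemma two_div_sqrt2: "2 / complex_of_real (sqrt 2) = complex_of_real (sqrt 2)"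
proof -
  have "2 / sqrt 2 = sqrt (2::real)" by (simp add: real_div_sqrt)
  then show ?thesis by (metis of_real_divide of_real_numeral)
qed

lemma density: "n \<ge> 1 \<Longrightarrow> density_on (idx_set n (\<lambda>_. 2)) (rho n)"
  unfolding density_on_def
proof
  assume n: "n \<ge> 1"
  show "psd_on (idx_set n (\<lambda>_. 2)) (rho n)"
    unfolding rho_def by (rule psd_rank1) simp
  have "(\<Sum>i\<in>idx_set n (\<lambda>_. 2). rho n i i) = (\<Sum>i\<in>idx_set n (\<lambda>_. 2). psi n i * psi n i)"
    unfolding rho_def by simp
  also have "\<dots> = 1"
    using n ZO_ne[OF n] apply (simp add: sum_psi)
    apply (simp add: psi_def two_div_sqrt2 flip: of_real_mult of_real_add)
    done
  finally show "(\<Sum>i\<in>idx_set n (\<lambda>_. 2). rho n i i) = 1" .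
qed

lemma cis_norm1: "cis t * cis (- t) = 1"
  by (simp add: cis_mult)

lemma sg_sq: "sg m * sg m = 1" unfolding sg_def by simp
lemma cnj_sg[simp]: "cnj (sg m) = sg m" unfolding sg_def by simp

lemma povm: "povm2 2 (Eff \<theta> j s)"
  unfolding povm2_def
proof (intro conjI allI impI)
  show "psd_on {..<2} (Eff \<theta> j s False)" "psd_on {..<2} (Eff \<theta> j s True)"
    unfolding Eff_def by (rule psd_rank1, simp)+
  fix a b :: nat assume "a < 2" "b < 2"
  then have "a \<in> {0,1}" "b \<in> {0,1}" by auto
  then show "Eff \<theta> j s False a b + Eff \<theta> j s True a b = (if a = b then 1 else 0)"
    unfolding Eff_def uu_def
    by (auto simp: sg_def algebra_simps cis_mult cis_cnj)
qed

lemma prod_cis: "finite A \<Longrightarrow> (\<Prod>j\<in>A. cis (f j)) = cis (\<Sum>j\<in>A. f j)"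
  by (induction A rule: finite_induct) (auto simp: cis_mult)

lemma parity_Suc: "parity (Suc n) m = (parity n m \<noteq> m n)"
proof -
  have "{j. j < Suc n \<and> m j} = {j. j < n \<and> m j} \<union> (if m n then {n} else {})" by (auto simp: less_Suc_eq)
  then have "card {j. j < Suc n \<and> m j} = card {j. j < n \<and> m j} + (if m n then 1 else 0)"
    by (auto simp: card_insert_if)
  then show ?thesis unfolding parity_def by auto
qed

lemma prod_sg: "(\<Prod>j<n. sg (m j)) = (if parity n m then -1 else 1)"
  by (induction n) (auto simp: parity_Suc sg_def, auto simp: parity_def)

lemma cis_piK: "cis (pi * real K) = (-1)^K"
  by (metis DeMoivre cis_pi mult.commute)

lemma cis_mpiK: "cis (- (pi * real K)) = (-1)^K"
proof -
  have "cis (- (pi * real K)) = cnj (cis (pi * real K))" by (simp add: cis_cnj)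
  then show ?thesis by (simp add: cis_piK)
qed

lemma ghz:
  assumes n: "n \<ge> 1" and K: "(\<Sum>j<n. \<theta> j (s j)) = pi * real K"
  shows "joint_prob n (\<lambda>_. 2) (rho n) (Eff \<theta>) s m = (if parity n m = odd K then 2 / 2^n else 0)"
proof -
  let ?S = "idx_set n (\<lambda>_. 2)"
  define G where "G i k = (\<Prod>j<n. Eff \<theta> j (s j) (m j) (k j) (i j))" for i k
  define c where "c = complex_of_real (1 / sqrt 2)"
  have cc: "c * c = 1/2" unfolding c_def
    by (metis of_real_divide of_real_mult of_real_1 of_real_numeral real_sqrt_mult_self
        times_divide_times_eq mult_1 real_sqrt_pow2 power2_eq_square zero_le_numeral)
  have "joint_prob n (\<lambda>_. 2) (rho n) (Eff \<theta>) s m = (\<Sum>i\<in>?S. psi n i * (\<Sum>k\<in>?S. psi n k * G i k))"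
    unfolding joint_prob_def rho_def G_def sum_distrib_left by (simp add: mult.assoc)
  also have "\<dots> = c * (c * (G (Zv n) (Zv n) + G (Zv n) (Ov n)) + c * (G (Ov n) (Zv n) + G (Ov n) (Ov n)))"
  proof -
    have inner: "(\<Sum>k\<in>?S. psi n k * G i k) = c * (G i (Zv n) + G i (Ov n))" for i
      by (rule sum_psi[OF n, folded c_def])
    show ?thesis unfolding inner by (subst sum_psi[OF n, folded c_def]) simp
  qed
  also have "\<dots> = (1/2) * (G (Zv n) (Zv n) + G (Zv n) (Ov n) + G (Ov n) (Zv n) + G (Ov n) (Ov n))"
    by (simp add: algebra_simps cc mult.assoc[symmetric])
  finally have jp: "joint_prob n (\<lambda>_. 2) (rho n) (Eff \<theta>) s m =
     (1/2) * (G (Zv n) (Zv n) + G (Zv n) (Ov n) + G (Ov n) (Zv n) + G (Ov n) (Ov n))" .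
  have ZZ: "G (Zv n) (Zv n) = (1/2)^n"
    unfolding G_def Zv_def by (simp add: Eff_def uu_def)
  have OO: "G (Ov n) (Ov n) = (1/2)^n"
    unfolding G_def Ov_def by (simp add: Eff_def uu_def cis_cnj sg_sq mult.assoc cis_mult
        mult.left_commute[of "cis _"])
  let ?sig = "(if parity n m then -1 else 1) :: complex"
  have ZO: "G (Zv n) (Ov n) = (1/2)^n * (?sig * (-1)^K)"
  proof -
    have "G (Zv n) (Ov n) = (\<Prod>j<n. (1/2) * (sg (m j) * cis (\<theta> j (s j))))"
      unfolding G_def Ov_def Zv_def by (intro prod.cong refl) (simp add: Eff_def uu_def)
    also have "\<dots> = (1/2)^n * ((\<Prod>j<n. sg (m j)) * (\<Prod>j<n. cis (\<theta> j (s j))))"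
      by (simp only: prod.distrib prod_constant card_lessThan)
    also have "\<dots> = (1/2)^n * (?sig * (-1)^K)"
      by (simp add: prod_sg prod_cis K cis_piK)
    finally show ?thesis .
  qed
  have OZ: "G (Ov n) (Zv n) = (1/2)^n * (?sig * (-1)^K)"
  proof -
    have "G (Ov n) (Zv n) = (\<Prod>j<n. (1/2) * (sg (m j) * cis (- \<theta> j (s j))))"
      unfolding G_def Ov_def Zv_def by (intro prod.cong refl) (simp add: Eff_def uu_def cis_cnj)
    also have "\<dots> = (1/2)^n * ((\<Prod>j<n. sg (m j)) * (\<Prod>j<n. cis (- \<theta> j (s j))))"
      by (simp only: prod.distrib prod_constant card_lessThan)
    also have "\<dots> = (1/2)^n * (?sig * (-1)^K)"
      by (simp add: prod_sg prod_cis sum_negf K cis_mpiK)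
    finally show ?thesis .
  qed
  show ?thesis unfolding jp ZZ OO ZO OZ
    by (auto simp: power_divide field_simps)
qed



lemma parity_flip:
  assumes n: "n \<ge> 1"
  shows "parity n (m(0 := \<not> m 0)) = (\<not> parity n m)"
proof -
  let ?S = "{j. j < n \<and> m j}"
  have fin: "finite ?S" by auto
  show ?thesis
  proof (cases "m 0")
    case True
    then have "{j. j < n \<and> (m(0 := \<not> m 0)) j} = ?S - {0}" by auto
    moreover have "0 \<in> ?S" using True n by auto
    ultimately have "card {j. j < n \<and> (m(0 := \<not> m 0)) j} = card ?S - 1"
      by (metis card_Diff_singleton fin)
    moreover have "card ?S \<ge> 1" using \<open>0 \<in> ?S\<close> fin by (metis One_nat_def Suc_leI card_gt_0_iff empty_iff)
    ultimately obtain k where "card ?S = Suc k" "card {j. j < n \<and> (m(0 := \<not> m 0)) j} = k"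
      by (metis Suc_diff_1 One_nat_def Suc_le_eq)
    then show ?thesis unfolding parity_def by simp
  next
    case False
    then have "{j. j < n \<and> (m(0 := \<not> m 0)) j} = insert 0 ?S" using n by auto
    moreover have "0 \<notin> ?S" using False by auto
    ultimately have "card {j. j < n \<and> (m(0 := \<not> m 0)) j} = Suc (card ?S)" using fin by simp
    then show ?thesis unfolding parity_def by simp
  qed
qed



lemma card_parity_class:
  assumes n: "n \<ge> 1"
  shows "card {m \<in> PiE {..<n} (\<lambda>_. UNIV). parity n m = b} * 2 = 2 ^ n"
proof -
  let ?A = "\<lambda>b. {m \<in> PiE {..<n} (\<lambda>_. UNIV :: bool set). parity n m = b}"
  let ?phi = "\<lambda>m::nat \<Rightarrow> bool. m(0 := \<not> m 0)"
  have z: "0 \<in> {..<n}" using n by auto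
  have mem: "?phi m \<in> PiE {..<n} (\<lambda>_. UNIV)" if "m \<in> PiE {..<n} (\<lambda>_. UNIV)" for m
    using that z by (simp add: PiE_iff extensional_def)
  have bij: "bij_betw ?phi (?A b) (?A (\<not> b))" for b
  proof (rule bij_betwI[where g = ?phi])
    show "?phi \<in> ?A b \<rightarrow> ?A (\<not> b)"
      using mem parity_flip[OF n] by blast
    show "?phi \<in> ?A (\<not> b) \<rightarrow> ?A b"
      using mem parity_flip[OF n] by blast
  qed simp_all
  have eq: "card (?A b) = card (?A (\<not> b))" for b using bij_betw_same_card[OF bij] .
  have un: "PiE {..<n} (\<lambda>_. UNIV :: bool set) = ?A True \<union> ?A False" by blast
  have fin: "finite (PiE {..<n} (\<lambda>_. UNIV :: bool set))" by (intro finite_PiE) auto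
  have c1: "card (PiE {..<n} (\<lambda>_. UNIV :: bool set)) = 2 ^ n" by (simp add: card_PiE)
  have c2: "card (PiE {..<n} (\<lambda>_. UNIV :: bool set)) = card (?A True) + card (?A False)"
  proof -
    have "finite (?A True)" "finite (?A False)" using fin by auto
    moreover have "?A True \<inter> ?A False = {}" by blast
    ultimately show ?thesis by (subst un, intro card_Un_disjoint)
  qed
  have "card (?A True) = card (?A False)" using eq[of True] by simp
  then show ?thesis using c1 c2 by (cases b) simp_all
qed



theorem theorem3p4p1:
  fixes r :: nat and f :: "bool list \<Rightarrow> bool"
  assumes "r \<ge> 1"
  shows "\<exists>n d P \<rho> E.
     1 \<le> n \<and> n \<le> 2 ^ r - 1 \<and>
     (\<forall>j<n. \<exists>k<r. P j k) \<and>
     (\<forall>j<n. d j \<ge> 1) \<and>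
     density_on (idx_set n d) \<rho> \<and>
     (\<forall>j<n. \<forall>s. povm2 (d j) (E j s)) \<and>
     performs_det r n d P \<rho> E f"
proof -
  define n :: nat where "n = 2 ^ r - 1"
  have "(2::nat) ^ r \<ge> 2 ^ 1" using assms by (intro power_increasing) auto
  then have n1: "n \<ge> 1" unfolding n_def by simp
  have n2: "2 ^ r = Suc n" unfolding n_def using n1 n_def by simp
  define P where "P j k = bit (Suc j) k" for j k
  define b0 where "b0 = f (replicate r False)"
  define g where "g x = (of_bool (f x \<noteq> b0) :: real)" for x
  obtain c0 c where rep: "\<And>x. length x = r \<Longrightarrow> g x = c0 + (\<Sum>a<2^r. c a * par r a x)"
    using rep_all[of r g] unfolding rep_def by blast
  have par0: "par r a (replicate r False) = 0" for a
  proof -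
    have e: "{k. k < r \<and> bit a k \<and> replicate r False ! k} = {}" by auto
    show ?thesis unfolding par_def e by simp
  qed
  have "g (replicate r False) = c0" using rep[of "replicate r False"] by (simp add: par0)
  then have c00: "c0 = 0" unfolding g_def b0_def by simp
  have parz: "par r 0 x = 0" for x unfolding par_def by simp
  have gx: "g x = (\<Sum>j<n. c (Suc j) * par r (Suc j) x)" if "length x = r" for x
    using rep[OF that] unfolding c00 n2 sum.lessThan_Suc_shift by (simp add: parz)
  define \<theta> where "\<theta> j s = pi * ((if j = 0 \<and> b0 then 1 else 0) + (if s then c (Suc j) else 0))" for j s
  show ?thesis
  proof (intro exI conjI)
    show "1 \<le> n" by (rule n1)
    show "n \<le> 2 ^ r - 1" unfolding n_def ..
    show "\<forall>j<n. \<exists>k<r. P j k"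
    proof (intro allI impI)
      fix j assume "j < n"
      then have lt: "Suc j < 2 ^ r" using n2 by simp
      show "\<exists>k<r. P j k"
      proof (rule ccontr)
        assume "\<not> (\<exists>k<r. P j k)"
        then have lo: "\<not> bit (Suc j) k" if "k < r" for k using that unfolding P_def by blast
        have hi: "\<not> bit (Suc j) k" if "\<not> k < r" for k
        proof -
          have "(2::nat) ^ r \<le> 2 ^ k" using that by (intro power_increasing) auto
          then have "Suc j < 2 ^ k" using lt by linarith
          then have "Suc j div 2 ^ k = 0" by (rule div_less)
          then show ?thesis by (simp add: bit_iff_odd)
        qed
        have "\<forall>k. \<not> bit (Suc j) k" using lo hi by blast
        then have "Suc j = 0" by (simp add: bit_eq_iff)
        then show False by simp
      qed
    qed
    show "\<forall>j<n. (\<lambda>_. 2::nat) j \<ge> 1" by simp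
    show "density_on (idx_set n (\<lambda>_. 2)) (rho n)" by (rule density[OF n1])
    show "\<forall>j<n. \<forall>s. povm2 ((\<lambda>_. 2) j) (Eff \<theta> j s)" by (simp add: povm)
    show "performs_det r n (\<lambda>_. 2) P (rho n) (Eff \<theta>) f"
      unfolding performs_det_def
    proof (intro allI impI)
      fix x :: "bool list" assume lx: "length x = r"
      let ?s = "ctrl_input r P x"
      define K where "K = (of_bool b0 + of_bool (f x \<noteq> b0) :: nat)"
      have oddK: "odd K = f x" unfolding K_def by (cases b0; cases "f x") auto
      have sp: "of_bool (?s j) = par r (Suc j) x" for j
        unfolding ctrl_input_def par_def P_def by simp
      have "(\<Sum>j<n. \<theta> j (?s j)) = pi * ((\<Sum>j<n. (if j = 0 \<and> b0 then 1 else 0)) + (\<Sum>j<n. c (Suc j) * par r (Suc j) x))"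
        unfolding \<theta>_def sum_distrib_left[symmetric] sum.distrib
        by (intro arg_cong[where f="\<lambda>t. pi * t"] arg_cong2[where f="(+)"] sum.cong refl)
           (auto simp: sp[symmetric])
      also have "(\<Sum>j<n. (if j = 0 \<and> b0 then 1 else 0 :: real)) = of_bool b0"
        using n1 by (cases b0) auto
      also have "(\<Sum>j<n. c (Suc j) * par r (Suc j) x) = g x" using gx[OF lx] by simp
      finally have th: "(\<Sum>j<n. \<theta> j (?s j)) = pi * real K" unfolding K_def g_def by simp
      have "(\<Sum>m\<in>{m \<in> PiE {..<n} (\<lambda>_. UNIV). parity n m = f x}. joint_prob n (\<lambda>_. 2) (rho n) (Eff \<theta>) ?s m)
          = (\<Sum>m\<in>{m \<in> PiE {..<n} (\<lambda>_. UNIV). parity n m = f x}. 2 / 2 ^ n)"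
        by (intro sum.cong refl) (simp add: ghz[where \<theta>=\<theta> and s="?s" and K=K, OF n1 th] oddK)
      also have "\<dots> = of_nat (card {m \<in> PiE {..<n} (\<lambda>_. UNIV). parity n m = f x}) * 2 / 2 ^ n"
        by simp
      also have "\<dots> = 1"
      proof -
        have "of_nat (card {m \<in> PiE {..<n} (\<lambda>_. UNIV). parity n m = f x} * 2) = (of_nat (2 ^ n) :: complex)"
          using card_parity_class[OF n1, of "f x"] by (rule arg_cong)
        then have "of_nat (card {m \<in> PiE {..<n} (\<lambda>_. UNIV). parity n m = f x}) * 2 = (2 ^ n :: complex)"
          by simp
        then show ?thesis by simp
      qed
      finally show "(\<Sum>m\<in>{m \<in> PiE {..<n} (\<lambda>_. UNIV). parity n m = f x}. joint_prob n (\<lambda>_. 2) (rho n) (Eff \<theta>) ?s m) = 1" .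
    qed
  qed
qed

end
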